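(* Let $A\in\mathbb{C}^{m\times n}$ ($m\ge 2$), $\alpha_0,\beta_0\in(0,\tfrac{\pi}{2})$, and suppose row $i_0$ of $A$ is weakly dominated by row $i_1$ of $A$ ($i_1\ne i_0$), i.e. $\mathrm{Re}((e^{i_0})^*Ad^j)\le\mathrm{Re}((e^{i_1})^*Ad^j)$ for all $j\in\mathcal J$, with strict inequality for at least one $j_0\in\mathcal J$. Let $A'\in\mathbb{C}^{(m-1)\times n}$ be obtained from $A$ by deleting row $i_0$. Suppose $(z^0,w^0)$, with $z^0=(z^0_1,\dots,z^0_{i_0-1},z^0_{i_0+1},\dots,z^0_m)\in S^{m-1}_{\alpha_0}$ and $w^0\in S^n_{\beta_0}$, is a complex Nash equilibrium of $G_{\mathcal C}(A')$, and suppose the condition of elimination $$\mathrm{Im}((e^{i_0})^*Aw^0)=\mathrm{Im}((e^{i_1})^*Aw^0)$$ holds. Then, with $z'^0=(z^0_1,\dots,z^0_{i_0-1},0,z^0_{i_0+1},\dots,z^0_m)\in S^m_{\alpha_0}$, the pair $(z'^0,w^0)$ is a complex Nash equilibrium of $G_{\mathcal C}(A)$ and $v_{A'}=v_A$.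
   Context: For $\gamma\in(0,\tfrac{\pi}{2})$ and $p\ge 1$ let $S^p_\gamma=\{z\in\mathbb{C}^p:\ \text{for each }k,\ z_k=0\text{ or }|\arg z_k|\le\gamma,\ \sum_{k=1}^p z_k=1\}$ ($\arg$ the principal argument in $(-\pi,\pi]$). Its extreme points are $d^1,\dots,d^{p^2}$, where $d^k=e^k$ (standard basis vector) for $k\le p$, and $d^{p+1},\dots,d^{p^2}$ are the $p(p-1)$ vectors having exactly two nonzero coordinates, one equal to $\tfrac12+bi$ and another equal to $\tfrac12-bi$, with $b=\tfrac12\tan\gamma$. The two-player zero-sum complex game $G_{\mathcal C}(A)$, for $A\in\mathbb{C}^{m\times n}$ and strategy arguments $\alpha_0,\beta_0$: player I chooses $z\in S^m_{\alpha_0}$, player II chooses $w\in S^n_{\beta_0}$, player I receives $\mathrm{Re}(z^*Aw)$ and player II receives $-\mathrm{Re}(z^*Aw)$ ($z^*$ the conjugate transpose); $G_{\mathcal C}(A')$ is defined the same way with $S^{m-1}_{\alpha_0}$ for player I. Here $d^j$, $j\in\mathcal J=\{1,\dots,n^2\}$, are the extreme points of $S^n_{\beta_0}$ and $e^i$ the standard basis vectors of $\mathbb{C}^m$. A pair $(z^0,w^0)$ is a complex Nash equilibrium if $\mathrm{Re}(z^*Aw^0)\le\mathrm{Re}((z^0)^*Aw^0)\le\mathrm{Re}((z^0)^*Aw)$ for all strategies $z$ of player I and $w$ of player II; the value of the game is $v_A=\mathrm{Re}((z^0)^*Aw^0)$ for a Nash equilibrium $(z^0,w^0)$. *)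

theory Defs
  imports "HOL-Analysis.Analysis"
begin

text \<open>Vectors in C^p are functions nat => complex, with coordinates indexed 0..p-1
  and required to vanish outside {..<p}. Matrices in C^(m x n) are functions
  nat => nat => complex (only entries with i < m, j < n matter).\<close>

definition cvecs :: "nat \<Rightarrow> (nat \<Rightarrow> complex) set" where
  "cvecs p = {z. \<forall>k. p \<le> k \<longrightarrow> z k = 0}"

definition strat :: "nat \<Rightarrow> real \<Rightarrow> (nat \<Rightarrow> complex) set" where
  "strat p \<gamma> = {z \<in> cvecs p. (\<forall>k<p. z k = 0 \<or> \<bar>Arg (z k)\<bar> \<le> \<gamma>) \<and> (\<Sum>k<p. z k) = 1}"

definition unitv :: "nat \<Rightarrow> nat \<Rightarrow> complex" where
  "unitv k = (\<lambda>i. if i = k then 1 else 0)"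

text \<open>The extreme points d^1, ..., d^(p^2) of S^p_gamma, as a set.\<close>
definition ext_pts :: "nat \<Rightarrow> real \<Rightarrow> (nat \<Rightarrow> complex) set" where
  "ext_pts p \<gamma> =
     {unitv k | k. k < p} \<union>
     {(\<lambda>i. (1/2 + \<i> * complex_of_real (tan \<gamma> / 2)) * unitv k i
           + (1/2 - \<i> * complex_of_real (tan \<gamma> / 2)) * unitv l i) | k l. k < p \<and> l < p \<and> k \<noteq> l}"

definition cform :: "nat \<Rightarrow> nat \<Rightarrow> (nat \<Rightarrow> complex) \<Rightarrow> (nat \<Rightarrow> nat \<Rightarrow> complex) \<Rightarrow> (nat \<Rightarrow> complex) \<Rightarrow> complex" where
  "cform p q z A w = (\<Sum>i<p. \<Sum>j<q. cnj (z i) * A i j * w j)"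

definition payoff :: "nat \<Rightarrow> nat \<Rightarrow> (nat \<Rightarrow> nat \<Rightarrow> complex) \<Rightarrow> (nat \<Rightarrow> complex) \<Rightarrow> (nat \<Rightarrow> complex) \<Rightarrow> real" where
  "payoff m n A z w = Re (cform m n z A w)"

definition complex_NE :: "nat \<Rightarrow> nat \<Rightarrow> real \<Rightarrow> real \<Rightarrow> (nat \<Rightarrow> nat \<Rightarrow> complex)
    \<Rightarrow> (nat \<Rightarrow> complex) \<Rightarrow> (nat \<Rightarrow> complex) \<Rightarrow> bool" where
  "complex_NE m n \<alpha>0 \<beta>0 A z0 w0 \<longleftrightarrow>
     z0 \<in> strat m \<alpha>0 \<and> w0 \<in> strat n \<beta>0 \<and>
     (\<forall>z \<in> strat m \<alpha>0. payoff m n A z w0 \<le> payoff m n A z0 w0) \<and>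
     (\<forall>w \<in> strat n \<beta>0. payoff m n A z0 w0 \<le> payoff m n A z0 w)"

definition game_value :: "nat \<Rightarrow> nat \<Rightarrow> real \<Rightarrow> real \<Rightarrow> (nat \<Rightarrow> nat \<Rightarrow> complex) \<Rightarrow> real" where
  "game_value m n \<alpha>0 \<beta>0 A =
     (THE v. \<exists>z0 w0. complex_NE m n \<alpha>0 \<beta>0 A z0 w0 \<and> v = payoff m n A z0 w0)"

definition del_row :: "nat \<Rightarrow> (nat \<Rightarrow> nat \<Rightarrow> complex) \<Rightarrow> (nat \<Rightarrow> nat \<Rightarrow> complex)" where
  "del_row i0 A = (\<lambda>i j. A (if i < i0 then i else Suc i) j)"

definition ins_zero :: "nat \<Rightarrow> (nat \<Rightarrow> complex) \<Rightarrow> (nat \<Rightarrow> complex)" where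
  "ins_zero i0 z = (\<lambda>k. if k < i0 then z k else if k = i0 then 0 else z (k - 1))"

end

theory Submission
  imports Defs
begin

lemma cone_iff:
  fixes z :: complex and g :: real
  assumes g: "0 < g" "g < pi/2"
  shows "(z = 0 \<or> \<bar>Arg z\<bar> \<le> g) \<longleftrightarrow> \<bar>Im z\<bar> \<le> Re z * tan g"
proof
  assume h: "z = 0 \<or> \<bar>Arg z\<bar> \<le> g"
  show "\<bar>Im z\<bar> \<le> Re z * tan g"
  proof (cases "z = 0")
    case True thus ?thesis by simp
  next
    case False
    define t where "t = Arg z"
    have tb: "\<bar>t\<bar> \<le> g" using h False t_def by auto
    have re: "cmod z * cos t = Re z"
      using False Arg_eq [of z] unfolding t_def by (metis Re_exp exp_Ln norm_exp_eq_Re Arg_def)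
    have im: "cmod z * sin t = Im z"
      using False Arg_eq [of z] unfolding t_def by (metis Im_exp exp_Ln norm_exp_eq_Re Arg_def)
    have c: "cos t > 0" using tb g by (intro cos_gt_zero_pi) auto
    have "\<bar>sin t\<bar> = cos t * \<bar>tan t\<bar>" using c by (simp add: tan_def abs_divide abs_mult)
    also have "\<bar>tan t\<bar> = tan \<bar>t\<bar>"
    proof (cases "t \<ge> 0")
      case True
      have "tan 0 \<le> tan t" using True tb g by (intro tan_mono_le) auto
      thus ?thesis using True by simp
    next
      case False
      have "tan t \<le> tan 0" using False tb g by (intro tan_mono_le) auto
      thus ?thesis using False by simp
    qed
    also have "cos t * tan \<bar>t\<bar> \<le> cos t * tan g"
      using tb g c by (intro mult_left_mono tan_mono_le) auto
    finally have "\<bar>sin t\<bar> \<le> cos t * tan g" .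
    hence "cmod z * \<bar>sin t\<bar> \<le> cmod z * (cos t * tan g)" by (intro mult_left_mono) auto
    moreover have "\<bar>Im z\<bar> = cmod z * \<bar>sin t\<bar>" using im[symmetric] by (simp add: abs_mult)
    ultimately show ?thesis using re by (simp add: mult.assoc[symmetric])
  qed
next
  assume h: "\<bar>Im z\<bar> \<le> Re z * tan g"
  have tg: "tan g > 0" using g by (intro tan_gt_zero) auto
  show "z = 0 \<or> \<bar>Arg z\<bar> \<le> g"
  proof (cases "Re z > 0")
    case False
    hence "Re z * tan g \<le> 0" using tg by (simp add: mult_nonpos_nonneg)
    hence i: "Im z = 0" using h by linarith
    have "0 \<le> Re z * tan g" using h by linarith
    hence "0 \<le> Re z" using tg by (simp add: zero_le_mult_iff)
    hence "Re z = 0" using False by linarith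
    note i this
    thus ?thesis by (simp add: complex_eq_iff)
  next
    case True
    have a: "Arg z = arctan (Im z / Re z)" using True by (rule arg_conv_arctan)
    have "\<bar>Im z / Re z\<bar> \<le> tan g" using h True by (simp add: abs_divide pos_divide_le_eq mult.commute)
    hence "- tan g \<le> Im z / Re z" "Im z / Re z \<le> tan g" by linarith+
    hence "arctan (- tan g) \<le> Arg z" "Arg z \<le> arctan (tan g)"
      unfolding a arctan_le_iff by auto
    moreover have "arctan (tan g) = g" using g by (intro arctan_tan) auto
    ultimately have "\<bar>Arg z\<bar> \<le> g" by (simp add: arctan_minus)
    thus ?thesis by simp
  qed
qed

lemma term_ineq:
  fixes a b x y s C :: real
  assumes "a \<ge> 0" "s > 0" "\<bar>y\<bar> \<le> x * s" "b - a/s \<le> C" "C \<le> b + a/s"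
  shows "0 \<le> a * x - (b - C) * y"
proof -
  have "b - C \<le> a/s" "C - b \<le> a/s" using assms by linarith+
  hence h1: "(b - C) * s \<le> a" and h2: "(C - b) * s \<le> a" using assms(2)
    by (simp_all add: pos_le_divide_eq)
  have "(b - C) * s * y \<le> a * \<bar>y\<bar>"
  proof (cases "y \<ge> 0")
    case True thus ?thesis using mult_right_mono[OF h1 True] by simp
  next
    case False
    hence "0 \<le> -y" by simp
    from mult_right_mono[OF h2 this] show ?thesis using False by (simp add: algebra_simps)
  qed
  also have "a * \<bar>y\<bar> \<le> a * (x * s)" using assms by (intro mult_left_mono) auto
  finally have "((b - C) * y) * s \<le> (a * x) * s" by (simp add: algebra_simps)
  hence "(b - C) * y \<le> a * x" using assms(2) by simp
  thus ?thesis by simp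
qed

lemma sum_unitv: "k < n \<Longrightarrow> (\<Sum>j<n. c j * unitv k j) = (c k :: complex)"
  by (simp add: unitv_def if_distrib cong: if_cong)

lemma dom_ineq:
  fixes c w :: "nat \<Rightarrow> complex" and n :: nat and \<beta> :: real
  assumes b: "0 < \<beta>" "\<beta> < pi/2" and w: "w \<in> strat n \<beta>"
    and E: "\<forall>d\<in>ext_pts n \<beta>. 0 \<le> Re (\<Sum>j<n. c j * d j)"
  shows "0 \<le> Re (\<Sum>j<n. c j * w j)"
proof -
  define s where "s = tan \<beta>"
  have s0: "s > 0" unfolding s_def using b by (intro tan_gt_zero) auto
  have a: "0 \<le> Re (c k)" if "k < n" for k
  proof -
    have "unitv k \<in> ext_pts n \<beta>" unfolding ext_pts_def using that by blast
    hence "0 \<le> Re (\<Sum>j<n. c j * unitv k j)" using E by blast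
    thus ?thesis using sum_unitv[OF that, of c] by simp
  qed
  have pair: "0 \<le> Re (c k) / 2 - Im (c k) * (s/2) + (Re (c l) / 2 + Im (c l) * (s/2))"
    if kl: "k < n" "l < n" "k \<noteq> l" for k l
  proof -
    define p where "p = 1/2 + \<i> * complex_of_real (tan \<beta> / 2)"
    define q where "q = 1/2 - \<i> * complex_of_real (tan \<beta> / 2)"
    have "(\<lambda>i. p * unitv k i + q * unitv l i) \<in> ext_pts n \<beta>"
      unfolding ext_pts_def p_def q_def using kl by blast
    from bspec[OF E this] have "0 \<le> Re (\<Sum>j<n. c j * (p * unitv k j + q * unitv l j))" by simp
    also have "(\<Sum>j<n. c j * (p * unitv k j + q * unitv l j))
        = (\<Sum>j<n. (c j * p) * unitv k j) + (\<Sum>j<n. (c j * q) * unitv l j)"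
      by (simp add: sum.distrib algebra_simps)
    also have "\<dots> = c k * p + c l * q" using kl by (simp add: sum_unitv)
    finally show ?thesis by (simp add: p_def q_def s_def)
  qed
  have ineq: "Im (c k) - Re (c k) / s \<le> Im (c l) + Re (c l) / s" if "k < n" "l < n" for k l
  proof (cases "k = l")
    case True
    have "0 \<le> Re (c k) / s" using a[OF that(1)] s0 by simp
    thus ?thesis using True by simp
  next
    case False
    have "(Im (c k) - Im (c l)) * s \<le> Re (c k) + Re (c l)"
      using pair[OF that False] by (simp add: algebra_simps)
    hence "Im (c k) - Im (c l) \<le> (Re (c k) + Re (c l)) / s" using s0
      by (simp add: pos_le_divide_eq)
    thus ?thesis by (simp add: add_divide_distrib)
  qed
  from w have ws: "(\<Sum>k<n. w k) = 1" and wc: "\<forall>k<n. w k = 0 \<or> \<bar>Arg (w k)\<bar> \<le> \<beta>"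
    unfolding strat_def by auto
  have n0: "n > 0" using ws by (cases n) auto
  define C where "C = Max ((\<lambda>k. Im (c k) - Re (c k) / s) ` {..<n})"
  have C1: "Im (c k) - Re (c k) / s \<le> C" if "k < n" for k
    unfolding C_def using that by (intro Max_ge) auto
  have "C \<in> (\<lambda>k. Im (c k) - Re (c k) / s) ` {..<n}"
    unfolding C_def using n0 by (intro Max_in) auto
  then obtain k0 where k0: "k0 < n" "C = Im (c k0) - Re (c k0) / s" by auto
  have C2: "C \<le> Im (c l) + Re (c l) / s" if "l < n" for l
    using ineq[OF k0(1) that] k0(2) by simp
  have ys: "(\<Sum>j<n. Im (w j)) = 0" using ws by (metis Im_sum one_complex.sel(2))
  have cone: "\<bar>Im (w j)\<bar> \<le> Re (w j) * s" if "j < n" for j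
    using cone_iff[OF b, of "w j"] wc that unfolding s_def by auto
  have "0 \<le> (\<Sum>j<n. Re (c j) * Re (w j) - (Im (c j) - C) * Im (w j))"
    by (intro sum_nonneg term_ineq[OF a s0 cone C1 C2]) auto
  also have "\<dots> = (\<Sum>j<n. Re (c j) * Re (w j) - Im (c j) * Im (w j)) + C * (\<Sum>j<n. Im (w j))"
    by (simp add: sum.distrib sum_distrib_left algebra_simps sum_subtractf)
  also have "\<dots> = Re (\<Sum>j<n. c j * w j)" using ys by (simp add: Re_sum)
  finally show ?thesis .
qed

lemma sum_unitv1: "k < m \<Longrightarrow> (\<Sum>i<m. unitv k i) = (1::complex)"
  by (simp add: unitv_def)

lemma cform_alt: "cform m n z A w = (\<Sum>i<m. cnj (z i) * (\<Sum>j<n. A i j * w j))"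
  unfolding cform_def by (simp add: sum_distrib_left mult.assoc)

lemma cform_unitv: "i < m \<Longrightarrow> cform m n (unitv i) A w = (\<Sum>j<n. A i j * w j)"
proof -
  assume i: "i < m"
  have "(\<lambda>ia. cnj (unitv i ia) * (\<Sum>j<n. A ia j * w j)) = (\<lambda>ia. if ia = i then (\<Sum>j<n. A ia j * w j) else 0)"
    by (auto simp: unitv_def)
  note h = this
  show ?thesis unfolding cform_alt h using i by simp
qed

lemma sum_ins_zero:
  assumes "i0 < m"
  shows "(\<Sum>i<m. f i (ins_zero i0 u i)) = f i0 0 + (\<Sum>k<m-1. f (if k < i0 then k else Suc k) (u k))"
proof -
  obtain m' where m: "m = Suc m'" using assms by (cases m) auto
  have i0: "i0 \<le> m'" using assms m by simp
  have "(\<Sum>i<m. f i (ins_zero i0 u i)) = (\<Sum>i\<in>{0..<i0}. f i (ins_zero i0 u i)) + (\<Sum>i\<in>{i0..<m}. f i (ins_zero i0 u i))"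
    using assms by (simp add: lessThan_atLeast0 sum.atLeastLessThan_concat)
  also have "(\<Sum>i\<in>{i0..<m}. f i (ins_zero i0 u i)) = f i0 0 + (\<Sum>i\<in>{Suc i0..<Suc m'}. f i (ins_zero i0 u i))"
  proof -
    have "(\<Sum>i\<in>{i0..<m}. f i (ins_zero i0 u i)) = f i0 (ins_zero i0 u i0) + (\<Sum>i\<in>{Suc i0..<m}. f i (ins_zero i0 u i))"
      using assms by (rule sum.atLeast_Suc_lessThan)
    moreover have "ins_zero i0 u i0 = 0" by (simp add: ins_zero_def)
    ultimately show ?thesis by (simp only: m)
  qed
  also have "(\<Sum>i\<in>{Suc i0..<Suc m'}. f i (ins_zero i0 u i)) = (\<Sum>k\<in>{i0..<m'}. f (Suc k) (u k))"
    unfolding sum.shift_bounds_Suc_ivl by (intro sum.cong) (auto simp: ins_zero_def)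
  also have "(\<Sum>i\<in>{0..<i0}. f i (ins_zero i0 u i)) = (\<Sum>k\<in>{0..<i0}. f (if k < i0 then k else Suc k) (u k))"
    by (intro sum.cong) (auto simp: ins_zero_def)
  also have "(\<Sum>k\<in>{i0..<m'}. f (Suc k) (u k)) = (\<Sum>k\<in>{i0..<m'}. f (if k < i0 then k else Suc k) (u k))"
    by (intro sum.cong) auto
  finally have e: "(\<Sum>i<m. f i (ins_zero i0 u i)) = (\<Sum>k\<in>{0..<i0}. f (if k < i0 then k else Suc k) (u k)) +
      (f i0 0 + (\<Sum>k\<in>{i0..<m'}. f (if k < i0 then k else Suc k) (u k)))" .
  have "(\<Sum>k<m-1. f (if k < i0 then k else Suc k) (u k)) = (\<Sum>k\<in>{0..<i0}. f (if k < i0 then k else Suc k) (u k)) +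
      (\<Sum>k\<in>{i0..<m'}. f (if k < i0 then k else Suc k) (u k))"
    unfolding lessThan_atLeast0 using i0 m by (simp only: sum.atLeastLessThan_concat diff_Suc_1 le0)
  with e show ?thesis by (simp only: ac_simps)
qed

lemma payoff_ins:
  assumes "i0 < m"
  shows "payoff m n A (ins_zero i0 u) w = payoff (m-1) n (del_row i0 A) u w"
  unfolding payoff_def cform_def del_row_def
  using sum_ins_zero[OF assms, of "\<lambda>i v. \<Sum>j<n. cnj v * A i j * w j" u] by simp

lemma strat_ins:
  assumes "i0 < m" "u \<in> strat (m-1) g"
  shows "ins_zero i0 u \<in> strat m g"
proof -
  have uc: "\<And>k. m - 1 \<le> k \<Longrightarrow> u k = 0" and ua: "\<forall>k<m-1. u k = 0 \<or> \<bar>Arg (u k)\<bar> \<le> g"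
    and us: "(\<Sum>k<m-1. u k) = 1"
    using assms(2) unfolding strat_def cvecs_def by auto
  have "ins_zero i0 u \<in> cvecs m" unfolding cvecs_def ins_zero_def using assms(1) uc by auto
  moreover have "\<forall>k<m. ins_zero i0 u k = 0 \<or> \<bar>Arg (ins_zero i0 u k)\<bar> \<le> g"
    unfolding ins_zero_def using assms(1) ua by auto
  moreover have "(\<Sum>k<m. ins_zero i0 u k) = 1"
    using sum_ins_zero[OF assms(1), of "\<lambda>i v. v" u] us by simp
  ultimately show ?thesis unfolding strat_def by auto
qed

definition delv :: "nat \<Rightarrow> (nat \<Rightarrow> complex) \<Rightarrow> nat \<Rightarrow> complex" where
  "delv i0 z = (\<lambda>k. if k < i0 then z k else z (Suc k))"

lemma ins_delv: "z i0 = 0 \<Longrightarrow> ins_zero i0 (delv i0 z) = z"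
  unfolding ins_zero_def delv_def by (rule ext) auto

lemma strat_delv:
  assumes "i0 < m" "z \<in> strat m g" "z i0 = 0"
  shows "delv i0 z \<in> strat (m-1) g"
proof -
  have zc: "\<And>k. m \<le> k \<Longrightarrow> z k = 0" and za: "\<forall>k<m. z k = 0 \<or> \<bar>Arg (z k)\<bar> \<le> g"
    and zs: "(\<Sum>k<m. z k) = 1"
    using assms(2) unfolding strat_def cvecs_def by auto
  have "delv i0 z \<in> cvecs (m-1)" unfolding cvecs_def delv_def using assms(1) zc by auto
  moreover have "\<forall>k<m-1. delv i0 z k = 0 \<or> \<bar>Arg (delv i0 z k)\<bar> \<le> g"
  proof (intro allI impI)
    fix k assume "k < m - 1"
    hence "k < m" "Suc k < m" by auto
    thus "delv i0 z k = 0 \<or> \<bar>Arg (delv i0 z k)\<bar> \<le> g" unfolding delv_def using za by simp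
  qed
  moreover have "(\<Sum>k<m-1. delv i0 z k) = 1"
  proof -
    have "(\<Sum>k<m. ins_zero i0 (delv i0 z) k) = (\<Sum>k<m-1. delv i0 z k)"
      using sum_ins_zero[OF assms(1), of "\<lambda>i v. v" "delv i0 z"] by simp
    thus ?thesis unfolding ins_delv[of z i0, OF assms(3)] zs by simp
  qed
  ultimately show ?thesis unfolding strat_def by (simp only: mem_Collect_eq)
qed

lemma value_eq:
  assumes "complex_NE m n a b A z1 w1"
  shows "game_value m n a b A = payoff m n A z1 w1"
  unfolding game_value_def
proof (rule the_equality)
  show "\<exists>z0 w0. complex_NE m n a b A z0 w0 \<and> payoff m n A z1 w1 = payoff m n A z0 w0"
    using assms by blast
next
  fix v assume "\<exists>z0 w0. complex_NE m n a b A z0 w0 \<and> v = payoff m n A z0 w0"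
  then obtain z2 w2 where h: "complex_NE m n a b A z2 w2" "v = payoff m n A z2 w2" by blast
  have 1: "payoff m n A z1 w1 \<le> payoff m n A z1 w2" "payoff m n A z2 w1 \<le> payoff m n A z1 w1"
    using assms h(1) unfolding complex_NE_def by blast+
  have 2: "payoff m n A z2 w2 \<le> payoff m n A z2 w1" "payoff m n A z1 w2 \<le> payoff m n A z2 w2"
    using assms h(1) unfolding complex_NE_def by blast+
  show "v = payoff m n A z1 w1" using 1 2 h(2) by linarith
qed

lemma sum_upd:
  fixes z r :: "nat \<Rightarrow> complex"
  assumes "k < m" "l < m"
  shows "(\<Sum>i<m. cnj (z i + c * (unitv l i - unitv k i)) * r i)
       = (\<Sum>i<m. cnj (z i) * r i) + cnj c * (r l - r k)"
proof -
  have cu: "\<And>a i. cnj (unitv a i) = unitv a i" by (simp add: unitv_def)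
  have "(\<Sum>i<m. cnj (z i + c * (unitv l i - unitv k i)) * r i)
      = (\<Sum>i<m. cnj (z i) * r i + (cnj c * r i) * unitv l i - (cnj c * r i) * unitv k i)"
    by (intro sum.cong) (simp_all add: cu algebra_simps)
  also have "\<dots> = (\<Sum>i<m. cnj (z i) * r i) + (\<Sum>i<m. (cnj c * r i) * unitv l i) - (\<Sum>i<m. (cnj c * r i) * unitv k i)"
    by (simp add: sum.distrib sum_subtractf)
  also have "\<dots> = (\<Sum>i<m. cnj (z i) * r i) + cnj c * r l - cnj c * r k"
    using assms by (simp add: sum_unitv)
  finally show ?thesis by (simp add: algebra_simps)
qed

theorem theorem6p9:
  fixes m n :: nat and \<alpha>0 \<beta>0 :: real and A :: "nat \<Rightarrow> nat \<Rightarrow> complex"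
    and i0 i1 :: nat and z0 w0 :: "nat \<Rightarrow> complex"
  assumes "m \<ge> 2"
    and "0 < \<alpha>0" "\<alpha>0 < pi / 2" "0 < \<beta>0" "\<beta>0 < pi / 2"
    and "i0 < m" "i1 < m" "i1 \<noteq> i0"
    and "\<forall>d \<in> ext_pts n \<beta>0. Re (cform m n (unitv i0) A d) \<le> Re (cform m n (unitv i1) A d)"
    and "\<exists>d \<in> ext_pts n \<beta>0. Re (cform m n (unitv i0) A d) < Re (cform m n (unitv i1) A d)"
    and "complex_NE (m - 1) n \<alpha>0 \<beta>0 (del_row i0 A) z0 w0"
    and "Im (cform m n (unitv i0) A w0) = Im (cform m n (unitv i1) A w0)"
  shows "complex_NE m n \<alpha>0 \<beta>0 A (ins_zero i0 z0) w0
    \<and> game_value (m - 1) n \<alpha>0 \<beta>0 (del_row i0 A) = game_value m n \<alpha>0 \<beta>0 A"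
proof -
  note a = assms
  define A' where "A' = del_row i0 A"
  define z' where "z' = ins_zero i0 z0"
  define r where "r = (\<lambda>i. \<Sum>j<n. A i j * w0 j)"
  have z0s: "z0 \<in> strat (m-1) \<alpha>0" and w0s: "w0 \<in> strat n \<beta>0"
    and br1: "\<And>z. z \<in> strat (m-1) \<alpha>0 \<Longrightarrow> payoff (m-1) n A' z w0 \<le> payoff (m-1) n A' z0 w0"
    and br2: "\<And>w. w \<in> strat n \<beta>0 \<Longrightarrow> payoff (m-1) n A' z0 w0 \<le> payoff (m-1) n A' z0 w"
    using a(11) unfolding complex_NE_def A'_def by auto
  have pay: "\<And>w. payoff m n A z' w = payoff (m-1) n A' z0 w"
    unfolding z'_def A'_def by (rule payoff_ins[OF a(6)])
  have z's: "z' \<in> strat m \<alpha>0" unfolding z'_def by (rule strat_ins[OF a(6) z0s])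
  have ta: "tan \<alpha>0 > 0" using a(2,3) by (intro tan_gt_zero) auto
  have D: "0 \<le> Re (\<Sum>j<n. (A i1 j - A i0 j) * w0 j)"
  proof (rule dom_ineq[OF a(4,5) w0s], intro ballI)
    fix d assume "d \<in> ext_pts n \<beta>0"
    hence "Re (\<Sum>j<n. A i0 j * d j) \<le> Re (\<Sum>j<n. A i1 j * d j)"
      using a(9) cform_unitv[OF a(6)] cform_unitv[OF a(7)] by auto
    moreover have "(\<Sum>j<n. (A i1 j - A i0 j) * d j) = (\<Sum>j<n. A i1 j * d j) - (\<Sum>j<n. A i0 j * d j)"
      by (simp add: sum_subtractf left_diff_distrib)
    ultimately show "0 \<le> Re (\<Sum>j<n. (A i1 j - A i0 j) * d j)" by simp
  qed
  have D2: "(\<Sum>j<n. (A i1 j - A i0 j) * w0 j) = r i1 - r i0"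
    unfolding r_def by (simp add: sum_subtractf left_diff_distrib)
  have ReD: "0 \<le> Re (r i1 - r i0)" using D D2 by simp
  have ImD: "Im (r i1 - r i0) = 0"
    using a(12) cform_unitv[OF a(6)] cform_unitv[OF a(7)] unfolding r_def by simp
  have payr: "\<And>z. payoff m n A z w0 = Re (\<Sum>i<m. cnj (z i) * r i)"
    unfolding payoff_def cform_alt r_def ..
  have BR: "payoff m n A z w0 \<le> payoff m n A z' w0" if zs: "z \<in> strat m \<alpha>0" for z
  proof -
    define zt where "zt = (\<lambda>i. z i + z i0 * (unitv i1 i - unitv i0 i))"
    have zc: "\<And>k. m \<le> k \<Longrightarrow> z k = 0" and za: "\<And>k. k<m \<Longrightarrow> z k = 0 \<or> \<bar>Arg (z k)\<bar> \<le> \<alpha>0"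
      and zsum: "(\<Sum>k<m. z k) = 1"
      using zs unfolding strat_def cvecs_def by auto
    have cz: "\<bar>Im (z k)\<bar> \<le> Re (z k) * tan \<alpha>0" if "k < m" for k
      using za[OF that] cone_iff[OF a(2,3), of "z k"] by simp
    have zti0: "zt i0 = 0" unfolding zt_def using a(8) by (simp add: unitv_def)
    have zti1: "zt i1 = z i1 + z i0" unfolding zt_def using a(8) by (simp add: unitv_def)
    have zto: "\<And>k. k \<noteq> i0 \<Longrightarrow> k \<noteq> i1 \<Longrightarrow> zt k = z k" unfolding zt_def by (simp add: unitv_def)
    have ztc: "zt \<in> cvecs m" unfolding cvecs_def using zto zc a(6,7) by auto
    have zta: "\<forall>k<m. zt k = 0 \<or> \<bar>Arg (zt k)\<bar> \<le> \<alpha>0"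
    proof (intro allI impI)
      fix k assume k: "k < m"
      show "zt k = 0 \<or> \<bar>Arg (zt k)\<bar> \<le> \<alpha>0"
      proof (cases "k = i0")
        case True thus ?thesis using zti0 by simp
      next
        case False
        show ?thesis
        proof (cases "k = i1")
          case True
          have "\<bar>Im (z i1 + z i0)\<bar> \<le> Re (z i1 + z i0) * tan \<alpha>0"
          proof -
            have "\<bar>Im (z i1) + Im (z i0)\<bar> \<le> \<bar>Im (z i1)\<bar> + \<bar>Im (z i0)\<bar>" by (rule abs_triangle_ineq)
            also have "\<dots> \<le> Re (z i1) * tan \<alpha>0 + Re (z i0) * tan \<alpha>0" using cz[OF a(7)] cz[OF a(6)] by linarith
            finally show ?thesis by (simp add: distrib_right)
          qed
          thus ?thesis using True zti1 cone_iff[OF a(2,3), of "zt k"] by simp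
        next
          case False2: False
          thus ?thesis using False zto za k by simp
        qed
      qed
    qed
    have ztsum: "(\<Sum>k<m. zt k) = 1"
    proof -
      have "(\<Sum>k<m. zt k) = (\<Sum>k<m. z k) + z i0 * ((\<Sum>k<m. unitv i1 k) - (\<Sum>k<m. unitv i0 k))"
        unfolding zt_def by (simp add: sum.distrib sum_distrib_left sum_subtractf right_diff_distrib)
      thus ?thesis using zsum sum_unitv1[OF a(6)] sum_unitv1[OF a(7)] by simp
    qed
    have zts: "zt \<in> strat m \<alpha>0" unfolding strat_def using ztc zta ztsum by blast
    have e1: "payoff m n A zt w0 = payoff m n A z w0 + Re (cnj (z i0) * (r i1 - r i0))"
      unfolding payr zt_def sum_upd[OF a(6,7)] by simp
    have e2: "Re (cnj (z i0) * (r i1 - r i0)) = Re (z i0) * Re (r i1 - r i0)"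
      using ImD by simp
    have rz: "0 \<le> Re (z i0)"
    proof -
      have "0 \<le> Re (z i0) * tan \<alpha>0" using cz[OF a(6)] abs_ge_zero[of "Im (z i0)"] by linarith
      thus ?thesis using ta by (simp add: zero_le_mult_iff)
    qed
    have "0 \<le> Re (z i0) * Re (r i1 - r i0)" using rz ReD by (rule mult_nonneg_nonneg)
    hence 1: "payoff m n A z w0 \<le> payoff m n A zt w0" using e1 e2 by linarith
    have us: "delv i0 zt \<in> strat (m-1) \<alpha>0" by (rule strat_delv[OF a(6) zts zti0])
    have "payoff m n A zt w0 = payoff (m-1) n A' (delv i0 zt) w0"
      using payoff_ins[OF a(6), of n A "delv i0 zt" w0] ins_delv[of zt i0, OF zti0] unfolding A'_def by simp
    also have "\<dots> \<le> payoff (m-1) n A' z0 w0" by (rule br1[OF us])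
    also have "\<dots> = payoff m n A z' w0" using pay by simp
    finally show ?thesis using 1 by simp
  qed
  have NE: "complex_NE m n \<alpha>0 \<beta>0 A z' w0"
    unfolding complex_NE_def using z's w0s BR br2 pay by auto
  have "game_value (m - 1) n \<alpha>0 \<beta>0 A' = payoff (m-1) n A' z0 w0"
    by (rule value_eq) (use a(11) in \<open>simp add: A'_def\<close>)
  moreover have "game_value m n \<alpha>0 \<beta>0 A = payoff m n A z' w0" by (rule value_eq[OF NE])
  ultimately show ?thesis using NE pay unfolding A'_def z'_def by simp
qed

end
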